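(* Let $k\in\mathbb{N}$. For every finite set $A\subseteq\mathbb{N}$ with $\min(A)=0$ and $\max(A)\le k$ and $A\neq\{0,1,\ldots,k\}$, we have $d(A)<d(\{0,1,\ldots,k\})$. That is, $\{0,1,\ldots,k\}$ is the unique maximum of $d(\cdot)$ on the collection of sets $A\subseteq\mathbb{N}$ with $\min(A)=0$ and $\max(A)\le k$.
   Context: $\mathbb{N}=\{0,1,2,\ldots\}$. For $A,B\subseteq\mathbb{N}$ the sumset is $A+B=\{a+b: a\in A, b\in B\}$. For a nonempty finite set $C\subseteq\mathbb{N}$, a set $B\subseteq\mathbb{N}$ is an (additive) divisor of $C$ if there exists $D\subseteq\mathbb{N}$ with $B+D=C$; $d(C)$ denotes the number of distinct divisors of $C$. *)

theory Defs
  imports Main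
begin

definition sumset :: "nat set \<Rightarrow> nat set \<Rightarrow> nat set" where
  "sumset A B = {a + b | a b. a \<in> A \<and> b \<in> B}"

definition is_divisor :: "nat set \<Rightarrow> nat set \<Rightarrow> bool" where
  "is_divisor B C \<longleftrightarrow> (\<exists>D. sumset B D = C)"

definition num_divisors :: "nat set \<Rightarrow> nat" where
  "num_divisors C = card {B. is_divisor B C}"

end

theory Submission
  imports Defs
begin

lemma div_basic:
  assumes "is_divisor B A" "(0::nat) \<in> A"
  shows "B \<subseteq> A" "0 \<in> B"
    "\<exists>D. sumset B D = A \<and> (\<forall>b\<in>B. \<forall>d\<in>D. b + d \<in> A)"
proof -
  obtain D where D: "sumset B D = A" using assms(1) unfolding is_divisor_def by blast
  have "0 \<in> sumset B D" using D assms(2) by simp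
  then obtain b0 d0 where "b0 \<in> B" "d0 \<in> D" "0 = b0 + d0" unfolding sumset_def by blast
  hence "0 \<in> D" "0 \<in> B" by auto
  show "0 \<in> B" by fact
  show "B \<subseteq> A"
  proof
    fix b assume "b \<in> B"
    hence "b + 0 \<in> sumset B D" using \<open>0 \<in> D\<close> unfolding sumset_def by blast
    thus "b \<in> A" using D by simp
  qed
  show "\<exists>D. sumset B D = A \<and> (\<forall>b\<in>B. \<forall>d\<in>D. b + d \<in> A)"
    using D unfolding sumset_def by blast
qed

definition phi :: "nat set \<Rightarrow> nat set \<Rightarrow> nat set" where
  "phi A B = B \<union> ({0..Max B} - A)"

lemma phi_div:
  assumes fin: "finite A" and A0: "0 \<in> A" and Ak: "A \<subseteq> {0..k}" and dv: "is_divisor B A"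
  shows "is_divisor (phi A B) {0..k}"
proof -
  have BA: "B \<subseteq> A" and B0: "0 \<in> B" using div_basic[OF dv A0] by auto
  obtain D where D: "sumset B D = A" and DA: "\<forall>b\<in>B. \<forall>d\<in>D. b + d \<in> A"
    using div_basic(3)[OF dv A0] by blast
  have finB: "finite B" using BA fin finite_subset by blast
  define b where "b = Max B"
  have bB: "b \<in> B" using finB B0 b_def Max_in by blast
  have bk: "b \<le> k" using bB BA Ak by auto
  define c where "c = k - b"
  have Dc: "\<forall>d\<in>D. d \<le> c" using DA bB Ak c_def by fastforce
  have Bb: "\<forall>x\<in>B. x \<le> b" using finB b_def by simp
  have ph: "phi A B = B \<union> ({0..b} - A)" unfolding phi_def b_def by simp
  have "sumset (phi A B) {0..c} = {0..k}"
  proof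
    have "\<forall>x\<in>phi A B. x \<le> b" using Bb ph by auto
    then show "sumset (phi A B) {0..c} \<subseteq> {0..k}"
      unfolding sumset_def using bk c_def by fastforce
  next
    show "{0..k} \<subseteq> sumset (phi A B) {0..c}"
    proof
      fix y assume y: "y \<in> {0..k}"
      have "\<exists>z\<in>phi A B. z \<le> y \<and> y \<le> z + c"
      proof (cases "y \<le> c")
        case True then show ?thesis using B0 ph by auto
      next
        case False
        show ?thesis
        proof (cases "b \<le> y")
          case True
          have "b \<in> phi A B" using bB ph by blast
          moreover have "y \<le> b + c" using y c_def bk by auto
          ultimately show ?thesis using True by blast
        next
          case ybF: False
          define w where "w = y"
        show ?thesis
        proof (cases "w \<in> A")
          case False
          hence "w \<in> phi A B" using ph w_def ybF by auto
          moreover have "w \<le> y" "y \<le> w + c" using w_def by auto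
          ultimately show ?thesis by blast
        next
          case True
          then have "w \<in> sumset B D" using D by simp
          then obtain \<beta> \<delta> where "\<beta> \<in> B" "\<delta> \<in> D" "w = \<beta> + \<delta>" unfolding sumset_def by blast
          moreover have "\<delta> \<le> c" using Dc \<open>\<delta> \<in> D\<close> by auto
          moreover have "\<beta> \<in> phi A B" using \<open>\<beta> \<in> B\<close> ph by blast
          ultimately show ?thesis using w_def by (intro bexI[of _ \<beta>]) auto
        qed
        qed
      qed
      then obtain z where "z \<in> phi A B" "z \<le> y" "y \<le> z + c" by blast
      then have "y = z + (y - z)" "y - z \<in> {0..c}" by auto
      then show "y \<in> sumset (phi A B) {0..c}" unfolding sumset_def using \<open>z \<in> phi A B\<close> by blast
    qed
  qed
  then show ?thesis unfolding is_divisor_def by blast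
qed

lemma phi_inj:
  assumes A0: "0 \<in> A" and d1: "is_divisor B1 A" and d2: "is_divisor B2 A"
    and eq: "phi A B1 = phi A B2"
  shows "B1 = B2"
proof -
  have s1: "B1 \<subseteq> A" by (rule div_basic(1)[OF d1 A0])
  have s2: "B2 \<subseteq> A" by (rule div_basic(1)[OF d2 A0])
  have g: "\<And>B X. B \<subseteq> A \<Longrightarrow> (B \<union> (X - A)) \<inter> A = B" by blast
  have "phi A B1 \<inter> A = B1" unfolding phi_def by (rule g[OF s1])
  moreover have "phi A B2 \<inter> A = B2" unfolding phi_def by (rule g[OF s2])
  ultimately show ?thesis using eq by metis
qed

lemma interval_div:
  assumes "j \<le> (k::nat)"
  shows "is_divisor {0..j} {0..k}"
proof -
  have "sumset {0..j} {0..k-j} = {0..k}"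
  proof
    show "sumset {0..j} {0..k-j} \<subseteq> {0..k}" unfolding sumset_def using assms by (auto simp: atLeastAtMost_iff)
    show "{0..k} \<subseteq> sumset {0..j} {0..k-j}"
    proof
      fix y assume y: "y \<in> {0..k}"
      show "y \<in> sumset {0..j} {0..k-j}"
      proof (cases "y \<le> j")
        case True
        have "y \<in> {0..j}" "(0::nat) \<in> {0..k-j}" "y = y + 0" using True by auto
        then show ?thesis unfolding sumset_def by blast
      next
        case False
        then have "y = j + (y - j)" "y - j \<in> {0..k - j}" "j \<in> {0..j}" using y by auto
        then show ?thesis unfolding sumset_def by blast
      qed
    qed
  qed
  then show ?thesis unfolding is_divisor_def by blast
qed

theorem mainTheorem1:
  fixes k :: nat and A :: "nat set"
  assumes "finite A" and "A \<noteq> {}" and "Min A = 0" and "Max A \<le> k"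
    and "A \<noteq> {0..k}"
  shows "num_divisors A < num_divisors {0..k}"
proof -
  have A0: "0 \<in> A" using assms(1,2,3) Min_in by metis
  have Ak: "A \<subseteq> {0..k}"
  proof
    fix x assume "x \<in> A"
    then have "x \<le> Max A" using Max_ge[OF assms(1)] by blast
    then show "x \<in> {0..k}" using assms(4) by simp
  qed
  obtain j where j: "j \<in> {0..k}" "j \<notin> A" using Ak assms(5) by blast
  define S where "S = {B. is_divisor B A}"
  define T where "T = {B. is_divisor B {0..k}}"
  have finT: "finite T"
  proof -
    have "T \<subseteq> Pow {0..k}"
    proof
      fix B assume "B \<in> T"
      then have "is_divisor B {0..k}" unfolding T_def by simp
      then have "B \<subseteq> {0..k}" using div_basic(1) by simp
      then show "B \<in> Pow {0..k}" by simp
    qed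
    then show ?thesis using finite_subset by blast
  qed
  have sub: "phi A ` S \<subseteq> T" unfolding S_def T_def using phi_div[OF assms(1) A0 Ak] by auto
  have inj: "inj_on (phi A) S" unfolding inj_on_def S_def using phi_inj[OF A0] by auto
  have jT: "{0..j} \<in> T" unfolding T_def using interval_div j by auto
  have jn: "{0..j} \<notin> phi A ` S"
  proof
    assume "{0..j} \<in> phi A ` S"
    then obtain B where B: "is_divisor B A" "phi A B = {0..j}" unfolding S_def by auto
    have BA: "B \<subseteq> A" by (rule div_basic(1)[OF B(1) A0])
    have B0: "0 \<in> B" by (rule div_basic(2)[OF B(1) A0])
    have finB: "finite B" using BA assms(1) finite_subset by blast
    have MB: "Max B \<in> B" using finB B0 Max_in by blast
    have "j \<in> phi A B" using B(2) by simp
    then have "j \<le> Max B" using j(2) BA unfolding phi_def by auto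
    moreover have "Max B \<le> j" using MB B(2) unfolding phi_def by auto
    ultimately show False using MB BA j(2) by auto
  qed
  have "card S = card (phi A ` S)" using inj card_image by metis
  also have "\<dots> < card T" using finT sub jT jn by (metis psubset_card_mono psubsetI)
  finally show ?thesis unfolding num_divisors_def S_def T_def .
qed

end
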